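(* (1) Invariance: if $t\to_w u$ then $t\equiv^{typ} u$. (2) Compatibility: if $t\equiv^{typ}u$ then $C\langle t\rangle\equiv^{typ} C\langle u\rangle$ for every context $C$.
   Context: Terms: $t ::= x \mid \lambda x.t \mid t\,u \mid t[x\backslash u]$ ($t[x\backslash u]$ an explicit substitution binding $x$ in $t$; terms up to $\alpha$). Values $v ::= \lambda x.t$. Substitution contexts $S ::= \langle\cdot\rangle\mid S[x\backslash u]$. Weak contexts $W ::= \langle\cdot\rangle \mid W\,t \mid t\,W \mid t[x\backslash W] \mid W[x\backslash u]$; $W\langle\langle t\rangle\rangle$ is plugging without capture of free variables of $t$. Root rules: $S\langle\lambda x.t\rangle u\mapsto_m S\langle t[x\backslash u]\rangle$; $W\langle\langle x\rangle\rangle[x\backslash u]\mapsto_e W\langle\langle u\rangle\rangle[x\backslash u]$; $t[x\backslash S\langle v\rangle]\mapsto_{gcv} S\langle t\rangle$ if $x\notin\mathrm{fv}(t)$. $\to_w$ is the union of their closures under weak contexts. A context $C$ is a term with exactly one hole, anywhere (also under abstraction or inside ESs). Silly multi types: linear types $L ::= \mathtt{n} \mid M\multimap L$; multi types $M ::= [L_i]_{i\in I}$ finite multisets ($\mathbf{0}$ empty, $\uplus$ sum). Type contexts $\Gamma$ map variables to multi types with finite support; $\uplus$ pointwise; $\Gamma\setminus\!\!\setminus x$ sets $x$ to $\mathbf{0}$. Rules: (ax) $x:[L]\vdash^{(0,1)} x:L$; (many) from $(\Gamma_i\vdash^{(m_i,e_i)} t : L_i)_{i\in I}$, $I$ finite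 possibly empty, infer $\uplus_i\Gamma_i\vdash^{(\sum m_i,\sum e_i)} t : [L_i]_{i\in I}$; ($\mathrm{ax}_\lambda$) $\vdash^{(0,0)}\lambda x.t:\mathtt{n}$; ($\lambda$) from $\Gamma\vdash^{(m,e)}t:L$ infer $\Gamma\setminus\!\!\setminus x\vdash^{(m,e)}\lambda x.t:\Gamma(x)\multimap L$; (@) from $\Gamma\vdash^{(m,e)} t : M\multimap L$ and $\Delta\vdash^{(m',e')} u : M\uplus[\mathtt{n}]$ infer $\Gamma\uplus\Delta\vdash^{(m+m'+1,e+e')} tu : L$; (ES) from $\Gamma\vdash^{(m,e)} t:L$ and $\Delta\vdash^{(m',e')}u:\Gamma(x)\uplus[\mathtt{n}]$ infer $(\Gamma\setminus\!\!\setminus x)\uplus\Delta\vdash^{(m+m',e+e')} t[x\backslash u]:L$. Type equivalence: $t\equiv^{typ}u$ iff for all $\Gamma$ and linear types $L$, $\Gamma\vdash t:L$ is derivable iff $\Gamma\vdash u:L$ is derivable (indices ignored). *)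

theory Defs
  imports Main "HOL-Library.Multiset"
begin

text \<open>Terms are taken up to alpha-equivalence by using de Bruijn indices.
  Lam t binds index 0 in t; ES t u is the explicit substitution t[x:=u],
  binding index 0 in t (u is outside the binder).\<close>

datatype trm = Var nat | Lam trm | App trm trm | ES trm trm

fun lift :: "nat \<Rightarrow> nat \<Rightarrow> trm \<Rightarrow> trm" where
  "lift k c (Var i) = Var (if i < c then i else i + k)"
| "lift k c (Lam t) = Lam (lift k (Suc c) t)"
| "lift k c (App t u) = App (lift k c t) (lift k c u)"
| "lift k c (ES t u) = ES (lift k (Suc c) t) (lift k c u)"

text \<open>Remove the (unused) index c: decrement indices > c.\<close>
fun lower :: "nat \<Rightarrow> trm \<Rightarrow> trm" where
  "lower c (Var i) = Var (if i < c then i else i - 1)"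
| "lower c (Lam t) = Lam (lower (Suc c) t)"
| "lower c (App t u) = App (lower c t) (lower c u)"
| "lower c (ES t u) = ES (lower (Suc c) t) (lower c u)"

fun free :: "nat \<Rightarrow> trm \<Rightarrow> bool" where
  "free x (Var i) = (i = x)"
| "free x (Lam t) = free (Suc x) t"
| "free x (App t u) = (free x t \<or> free x u)"
| "free x (ES t u) = (free (Suc x) t \<or> free x u)"

definition is_value :: "trm \<Rightarrow> bool" where
  "is_value t = (\<exists>b. t = Lam b)"

text \<open>Substitution contexts S: the list [u1,...,uk] (outermost first) represents
  the context <.>[xk:=uk]...[x1:=u1], i.e. plugS (u # us) t = (plugS us t)[x:=u].\<close>
fun plugS :: "trm list \<Rightarrow> trm \<Rightarrow> trm" where
  "plugS [] t = t"
| "plugS (u # us) t = ES (plugS us t) u"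

datatype wctx = WHole | WAppL wctx trm | WAppR trm wctx | WESArg trm wctx | WESBody wctx trm

text \<open>Plugging (capturing, i.e. literal replacement of the hole).\<close>
fun plugW :: "wctx \<Rightarrow> trm \<Rightarrow> trm" where
  "plugW WHole t = t"
| "plugW (WAppL W u) t = App (plugW W t) u"
| "plugW (WAppR u W) t = App u (plugW W t)"
| "plugW (WESArg u W) t = ES u (plugW W t)"
| "plugW (WESBody W u) t = ES (plugW W t) u"

fun depthW :: "wctx \<Rightarrow> nat" where
  "depthW WHole = 0"
| "depthW (WAppL W u) = depthW W"
| "depthW (WAppR u W) = depthW W"
| "depthW (WESArg u W) = depthW W"
| "depthW (WESBody W u) = Suc (depthW W)"

text \<open>Root rules. In W<<x>>[x:=u] the variable x at the hole refers to the outer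
  ES binder, i.e. has index depthW W; W<<u>> plugs u without capture, i.e. u is
  shifted over the depthW W + 1 binders.\<close>
inductive root :: "trm \<Rightarrow> trm \<Rightarrow> bool" where
  root_m: "root (App (plugS us (Lam t)) u) (plugS us (ES t (lift (length us) 0 u)))"
| root_e: "root (ES (plugW W (Var (depthW W))) u)
                (ES (plugW W (lift (Suc (depthW W)) 0 u)) u)"
| root_gcv: "is_value v \<Longrightarrow> \<not> free 0 t \<Longrightarrow>
    root (ES t (plugS us v)) (plugS us (lift (length us) 0 (lower 0 t)))"

inductive wstep :: "trm \<Rightarrow> trm \<Rightarrow> bool" where
  "root t u \<Longrightarrow> wstep (plugW W t) (plugW W u)"

datatype ctx = Hole | CLam ctx | CAppL ctx trm | CAppR trm ctx | CESBody ctx trm | CESArg trm ctx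

fun plugC :: "ctx \<Rightarrow> trm \<Rightarrow> trm" where
  "plugC Hole t = t"
| "plugC (CLam C) t = Lam (plugC C t)"
| "plugC (CAppL C u) t = App (plugC C t) u"
| "plugC (CAppR u C) t = App u (plugC C t)"
| "plugC (CESBody C u) t = ES (plugC C t) u"
| "plugC (CESArg u C) t = ES u (plugC C t)"

datatype lty = TN | Arr "lty multiset" lty

type_synonym tctx = "nat \<Rightarrow> lty multiset"

definition ctx_sum :: "tctx \<Rightarrow> tctx \<Rightarrow> tctx" where
  "ctx_sum G D = (\<lambda>x. G x + D x)"

definition ctx_empty :: tctx where
  "ctx_empty = (\<lambda>_. {#})"

definition ctx_single :: "nat \<Rightarrow> lty \<Rightarrow> tctx" where
  "ctx_single x L = (\<lambda>y. if y = x then {#L#} else {#})"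

text \<open>Removing the bound variable (index 0) and shifting: (G minus x) in de Bruijn form.\<close>
definition ctx_tail :: "tctx \<Rightarrow> tctx" where
  "ctx_tail G = (\<lambda>i. G (Suc i))"

text \<open>has_type G t L m e : G |-^(m,e) t : L ;  has_mtype G t M m e : G |-^(m,e) t : M.
  The rule (many) over a finite family is generated by empty/add.\<close>
inductive has_type :: "tctx \<Rightarrow> trm \<Rightarrow> lty \<Rightarrow> nat \<Rightarrow> nat \<Rightarrow> bool"
  and has_mtype :: "tctx \<Rightarrow> trm \<Rightarrow> lty multiset \<Rightarrow> nat \<Rightarrow> nat \<Rightarrow> bool" where
  t_ax: "has_type (ctx_single x L) (Var x) L 0 1"
| t_axlam: "has_type ctx_empty (Lam t) TN 0 0"
| t_lam: "has_type G t L m e \<Longrightarrow> has_type (ctx_tail G) (Lam t) (Arr (G 0) L) m e"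
| t_app: "has_type G t (Arr M L) m e \<Longrightarrow> has_mtype D u (M + {#TN#}) m' e' \<Longrightarrow>
          has_type (ctx_sum G D) (App t u) L (m + m' + 1) (e + e')"
| t_es: "has_type G t L m e \<Longrightarrow> has_mtype D u (G 0 + {#TN#}) m' e' \<Longrightarrow>
          has_type (ctx_sum (ctx_tail G) D) (ES t u) L (m + m') (e + e')"
| m_empty: "has_mtype ctx_empty t {#} 0 0"
| m_add: "has_type G t L m e \<Longrightarrow> has_mtype D t M m' e' \<Longrightarrow>
          has_mtype (ctx_sum G D) t (add_mset L M) (m + m') (e + e')"

definition typable :: "tctx \<Rightarrow> trm \<Rightarrow> lty \<Rightarrow> bool" where
  "typable G t L = (\<exists>m e. has_type G t L m e)"

definition fin_supp :: "tctx \<Rightarrow> bool" where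
  "fin_supp G = finite {x. G x \<noteq> {#}}"

definition typ_equiv :: "trm \<Rightarrow> trm \<Rightarrow> bool" where
  "typ_equiv t u = (\<forall>G L. fin_supp G \<longrightarrow> (typable G t L \<longleftrightarrow> typable G u L))"

end

theory Submission
  imports Defs "HOL-Library.Function_Algebras"
begin

definition ty :: "tctx \<Rightarrow> trm \<Rightarrow> lty \<Rightarrow> bool" where
  "ty G t L = (\<exists>m e. has_type G t L m e)"
definition mty :: "tctx \<Rightarrow> trm \<Rightarrow> lty multiset \<Rightarrow> bool" where
  "mty G t M = (\<exists>m e. has_mtype G t M m e)"
definition sing :: "nat \<Rightarrow> lty multiset \<Rightarrow> tctx" where
  "sing x A = (\<lambda>y. if y = x then A else {#})"

declare plus_fun_apply[simp del] zero_fun_apply[simp del]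
lemmas app_simps = plus_fun_apply zero_fun_apply

lemma ctx_sum_eq[simp]: "ctx_sum G D = G + D"
  by (rule ext) (simp add: ctx_sum_def app_simps)
lemma ctx_empty_eq[simp]: "ctx_empty = 0"
  by (rule ext) (simp add: ctx_empty_def app_simps)
lemma ctx_single_eq[simp]: "ctx_single x L = sing x {#L#}"
  by (rule ext) (simp add: ctx_single_def sing_def)

lemma tail_apply: "ctx_tail G i = G (Suc i)" by (simp add: ctx_tail_def)
lemma sing_apply: "sing x A y = (if y = x then A else {#})" by (simp add: sing_def)
lemmas app_simps2 = app_simps tail_apply sing_apply
lemma tail_add[simp]: "ctx_tail (G + D) = ctx_tail G + ctx_tail D" by (rule ext) (simp add: app_simps2)
lemma tail_zero[simp]: "ctx_tail 0 = 0" by (rule ext) (simp add: app_simps2)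
lemma tail_sing0[simp]: "ctx_tail (sing 0 A) = 0" by (rule ext) (simp add: app_simps2)
lemma tail_singS[simp]: "ctx_tail (sing (Suc x) A) = sing x A" by (rule ext) (simp add: app_simps2)
lemma sing_empty[simp]: "sing x {#} = 0" by (rule ext) (simp add: app_simps2)
lemma sing_add: "sing x (A + B) = sing x A + sing x B" by (rule ext) (simp add: app_simps2)

lemma ty_var: "ty (sing x {#L#}) (Var x) L"
  unfolding ty_def using t_ax[of x L] by auto
lemma ty_axlam: "ty 0 (Lam t) TN"
  unfolding ty_def using t_axlam[of t] by auto
lemma ty_lam: "ty G t L \<Longrightarrow> ty (ctx_tail G) (Lam t) (Arr (G 0) L)"
  unfolding ty_def using t_lam by blast
lemma ty_app: "ty G t (Arr M L) \<Longrightarrow> mty D u (M + {#TN#}) \<Longrightarrow> ty (G + D) (App t u) L"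
  unfolding ty_def mty_def using t_app by fastforce
lemma ty_es: "ty G t L \<Longrightarrow> mty D u (G 0 + {#TN#}) \<Longrightarrow> ty (ctx_tail G + D) (ES t u) L"
  unfolding ty_def mty_def using t_es by fastforce
lemma mty_empty: "mty 0 t {#}"
  unfolding mty_def using m_empty[of t] by auto
lemma mty_add: "ty G t L \<Longrightarrow> mty D t M \<Longrightarrow> mty (G + D) t (add_mset L M)"
  unfolding ty_def mty_def using m_add by fastforce

lemma ty_Var_iff: "ty G (Var x) L \<longleftrightarrow> G = sing x {#L#}"
  unfolding ty_def by (auto elim: has_type.cases intro: t_ax[of x L, simplified])

lemma ty_Lam_iff: "ty G (Lam t) L \<longleftrightarrow> (L = TN \<and> G = 0) \<or>
   (\<exists>G' L'. L = Arr (G' 0) L' \<and> G = ctx_tail G' \<and> ty G' t L')"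
  apply (rule iffI)
   apply (unfold ty_def)[1]
   apply (elim exE, erule has_type.cases; auto; blast)[1]
  using ty_axlam ty_lam by auto

lemma ty_App_iff: "ty G (App t u) L \<longleftrightarrow>
   (\<exists>G1 G2 M. G = G1 + G2 \<and> ty G1 t (Arr M L) \<and> mty G2 u (M + {#TN#}))"
  apply (rule iffI)
   apply (unfold ty_def mty_def)[1]
   apply (elim exE, erule has_type.cases; auto; blast)[1]
  using ty_app by auto

lemma ty_ES_iff: "ty G (ES t u) L \<longleftrightarrow>
   (\<exists>G1 G2. G = ctx_tail G1 + G2 \<and> ty G1 t L \<and> mty G2 u (G1 0 + {#TN#}))"
  apply (rule iffI)
   apply (unfold ty_def mty_def)[1]
   apply (elim exE, erule has_type.cases; auto; blast)[1]
  using ty_es by auto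

lemma mty_empty_iff: "mty G t {#} \<longleftrightarrow> G = 0"
  unfolding mty_def by (auto elim: has_mtype.cases intro: m_empty[of t, simplified])

lemma mty_raw: "mty G t N \<Longrightarrow> N \<noteq> {#} \<Longrightarrow>
   \<exists>La Ma G1 G2. N = add_mset La Ma \<and> G = G1 + G2 \<and> ty G1 t La \<and> mty G2 t Ma"
  unfolding ty_def mty_def by (elim exE, erule has_mtype.cases; auto; blast)

lemma mty_pick: "mty G t N \<Longrightarrow> L \<in># N \<Longrightarrow>
   \<exists>G1 G2. G = G1 + G2 \<and> ty G1 t L \<and> mty G2 t (N - {#L#})"
proof (induction "size N" arbitrary: N G rule: less_induct)
  case less
  then have "N \<noteq> {#}" by auto
  then obtain La Ma G1 G2 where h: "N = add_mset La Ma" "G = G1 + G2" "ty G1 t La" "mty G2 t Ma"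
    using mty_raw less.prems by blast
  show ?case
  proof (cases "La = L")
    case True
    then show ?thesis using h by auto
  next
    case False
    then have "L \<in># Ma" using h less.prems by auto
    then obtain K1 K2 where k: "G2 = K1 + K2" "ty K1 t L" "mty K2 t (Ma - {#L#})"
      using less.hyps[of Ma G2] h by auto
    have "mty (G1 + K2) t (add_mset La (Ma - {#L#}))" using mty_add h k by blast
    moreover have "add_mset La (Ma - {#L#}) = N - {#L#}" using h False \<open>L \<in># Ma\<close> by auto
    moreover have "G = K1 + (G1 + K2)" using h k by (simp add: add_ac)
    ultimately show ?thesis using k by metis
  qed
qed

lemma mty_add_iff: "mty G t (add_mset L M) \<longleftrightarrow>
   (\<exists>G1 G2. G = G1 + G2 \<and> ty G1 t L \<and> mty G2 t M)"
  using mty_pick[of G t "add_mset L M" L] mty_add by auto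

lemma mty_union_iff: "mty G t (A + B) \<longleftrightarrow>
   (\<exists>G1 G2. G = G1 + G2 \<and> mty G1 t A \<and> mty G2 t B)"
proof (induction A arbitrary: G)
  case empty
  then show ?case by (auto simp: mty_empty_iff)
next
  case (add x A)
  show ?case
  proof
    assume "mty G t (add_mset x A + B)"
    then obtain H1 H2 where "G = H1 + H2" "ty H1 t x" "mty H2 t (A + B)"
      by (auto simp: mty_add_iff)
    obtain K1 K2 where "H2 = K1 + K2" "mty K1 t A" "mty K2 t B" using add.IH[of H2] \<open>mty H2 t (A + B)\<close> by blast
    have "mty (H1 + K1) t (add_mset x A)" using mty_add \<open>ty H1 t x\<close> \<open>mty K1 t A\<close> by blast
    moreover have "G = (H1 + K1) + K2" using \<open>G = H1 + H2\<close> \<open>H2 = K1 + K2\<close> by (simp add: add.assoc)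
    ultimately show "\<exists>G1 G2. G = G1 + G2 \<and> mty G1 t (add_mset x A) \<and> mty G2 t B"
      using \<open>mty K2 t B\<close> by blast
  next
    assume "\<exists>G1 G2. G = G1 + G2 \<and> mty G1 t (add_mset x A) \<and> mty G2 t B"
    then obtain G1 G2 where "G = G1 + G2" "mty G1 t (add_mset x A)" "mty G2 t B" by auto
    then obtain H1 H2 where "G1 = H1 + H2" "ty H1 t x" "mty H2 t A" by (auto simp: mty_add_iff)
    have "mty (H2 + G2) t (A + B)" using add \<open>mty H2 t A\<close> \<open>mty G2 t B\<close> by auto
    then show "mty G t (add_mset x A + B)"
      using \<open>ty H1 t x\<close> \<open>G = G1 + G2\<close> \<open>G1 = H1 + H2\<close>
      by (auto simp: mty_add_iff add.assoc)
  qed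
qed

lemma mty_union: "mty G t A \<Longrightarrow> mty D t B \<Longrightarrow> mty (G + D) t (A + B)"
  using mty_union_iff by blast

lemma mty_single[simp]: "mty G t {#L#} \<longleftrightarrow> ty G t L"
  by (auto simp: mty_add_iff mty_empty_iff)

lemma fin_tail: "finite {x. G x \<noteq> {#}} \<Longrightarrow> finite {x. G (Suc x) \<noteq> ({#}::lty multiset)}"
proof -
  assume a: "finite {x. G x \<noteq> {#}}"
  have "{x. G (Suc x) \<noteq> {#}} = Suc -` {x. G x \<noteq> {#}}" by auto
  then show ?thesis using finite_vimageI[OF a inj_Suc] by simp
qed

lemma ty_fin: "has_type G t L m e \<Longrightarrow> fin_supp G"
  and mty_fin: "has_mtype G t M m e \<Longrightarrow> fin_supp G"
proof (induction rule: has_type_has_mtype.inducts)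
  case (t_ax x L)
  then show ?case unfolding fin_supp_def
    by (rule finite_subset[of _ "{x}"]) (auto simp: sing_apply)
next
  case (t_axlam t)
  then show ?case by (simp add: fin_supp_def app_simps)
next
  case (t_lam G t L m e)
  then show ?case unfolding fin_supp_def using fin_tail by (simp add: tail_apply)
next
  case (t_app G t M L m e D u m' e')
  then show ?case unfolding fin_supp_def
    by (rule_tac finite_subset[of _ "{x. G x \<noteq> {#}} \<union> {x. D x \<noteq> {#}}"]) (auto simp: app_simps)
next
  case (t_es G t L m e D u m' e')
  have "finite {x. ctx_tail G x \<noteq> {#}}" using t_es fin_tail unfolding fin_supp_def by (simp add: tail_apply)
  then show ?case using t_es unfolding fin_supp_def
    by (rule_tac finite_subset[of _ "{x. ctx_tail G x \<noteq> {#}} \<union> {x. D x \<noteq> {#}}"]) (auto simp: app_simps)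
next
  case (m_empty t)
  then show ?case by (simp add: fin_supp_def app_simps)
next
  case (m_add G t L m e D M m' e')
  then show ?case unfolding fin_supp_def
    by (rule_tac finite_subset[of _ "{x. G x \<noteq> {#}} \<union> {x. D x \<noteq> {#}}"]) (auto simp: app_simps)
qed

lemma typ_equiv_ty: "typ_equiv t u \<Longrightarrow> ty G t L \<longleftrightarrow> ty G u L"
  unfolding typ_equiv_def typable_def ty_def using ty_fin by blast

lemma ty_typ_equiv: "(\<And>G L. ty G t L \<longleftrightarrow> ty G u L) \<Longrightarrow> typ_equiv t u"
  unfolding typ_equiv_def typable_def ty_def by blast


definition shift :: "nat \<Rightarrow> nat \<Rightarrow> tctx \<Rightarrow> tctx" where
  "shift k c G = (\<lambda>i. if i < c then G i else if i < c + k then {#} else G (i - k))"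

lemma shift_add[simp]: "shift k c (G + D) = shift k c G + shift k c D"
  by (rule ext) (simp add: shift_def app_simps2)
lemma shift_zero[simp]: "shift k c 0 = 0"
  by (rule ext) (simp add: shift_def app_simps2)
lemma shift_sing: "shift k c (sing x A) = sing (if x < c then x else x + k) A"
  by (rule ext) (auto simp: shift_def app_simps2)
lemma tail_shift[simp]: "ctx_tail (shift k (Suc c) G) = shift k c (ctx_tail G)"
  by (rule ext) (auto simp: shift_def Suc_diff_le app_simps2)
lemma shift_Suc_0[simp]: "shift k (Suc c) G 0 = G 0"
  by (simp add: shift_def)
lemma shift10_0[simp]: "shift (Suc 0) 0 G 0 = {#}"
  by (simp add: shift_def)
lemma tail_shift10[simp]: "ctx_tail (shift (Suc 0) 0 G) = G"
  by (rule ext) (simp add: shift_def app_simps2)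

lemma mty_map:
  assumes "\<And>G L. ty G t L \<Longrightarrow> ty (f G) t' L" "\<And>G D. f (G + D) = f G + f D" "f 0 = 0"
  shows "mty G t M \<Longrightarrow> mty (f G) t' M"
proof (induction M arbitrary: G)
  case empty
  then show ?case using assms(3) by (simp add: mty_empty_iff)
next
  case (add x M)
  then obtain G1 G2 where "G = G1 + G2" "ty G1 t x" "mty G2 t M" by (auto simp: mty_add_iff)
  then have "mty (f G1 + f G2) t' (add_mset x M)" using add.IH assms mty_add by blast
  then show ?case using \<open>G = G1 + G2\<close> assms(2) by simp
qed

lemma mty_back:
  assumes "\<And>G' L. ty G' t' L \<Longrightarrow> \<exists>G. G' = f G \<and> ty G t L"
    "\<And>G D. f (G + D) = f G + f D" "f 0 = 0"
  shows "mty G' t' M \<Longrightarrow> \<exists>G. G' = f G \<and> mty G t M"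
proof (induction M arbitrary: G')
  case empty
  then show ?case using assms(3) by (auto simp: mty_empty_iff intro: exI[of _ 0])
next
  case (add x M)
  then obtain G1 G2 where "G' = G1 + G2" "ty G1 t' x" "mty G2 t' M" by (auto simp: mty_add_iff)
  moreover obtain H1 where "G1 = f H1" "ty H1 t x" using assms(1) \<open>ty G1 t' x\<close> by blast
  moreover obtain H2 where "G2 = f H2" "mty H2 t M" using add.IH \<open>mty G2 t' M\<close> by blast
  ultimately show ?case using assms(2) mty_add by metis
qed

lemma ty_lift: "ty G t L \<Longrightarrow> ty (shift k c G) (lift k c t) L"
proof (induction t arbitrary: c G L)
  case (Var x)
  then show ?case by (simp add: ty_Var_iff shift_sing)
next
  case (Lam t)
  from Lam.prems consider "L = TN" "G = 0"
    | G' L' where "L = Arr (G' 0) L'" "G = ctx_tail G'" "ty G' t L'"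
    by (auto simp: ty_Lam_iff)
  then show ?case
  proof cases
    case 1
    then show ?thesis by (simp add: ty_axlam)
  next
    case 2
    then show ?thesis using ty_lam[OF Lam.IH[of G' L' "Suc c"]] by simp
  qed
next
  case (App t1 t2)
  then obtain G1 G2 M where h: "G = G1 + G2" "ty G1 t1 (Arr M L)" "mty G2 t2 (M + {#TN#})"
    by (auto simp: ty_App_iff)
  have "mty (shift k c G2) (lift k c t2) (M + {#TN#})"
    by (rule mty_map[OF App.IH(2)]) (use h in auto)
  then show ?case using ty_app[OF App.IH(1)[OF h(2)]] h by simp
next
  case (ES t1 t2)
  then obtain G1 G2 where h: "G = ctx_tail G1 + G2" "ty G1 t1 L" "mty G2 t2 (G1 0 + {#TN#})"
    by (auto simp: ty_ES_iff)
  have "mty (shift k c G2) (lift k c t2) (G1 0 + {#TN#})"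
    by (rule mty_map[OF ES.IH(2)]) (use h in auto)
  then show ?case using ty_es[OF ES.IH(1)[OF h(2), of "Suc c"]] h by simp
qed

lemma mty_lift: "mty G t M \<Longrightarrow> mty (shift k c G) (lift k c t) M"
  by (rule mty_map[OF ty_lift]) auto

lemma ty_lift_back: "ty G' (lift k c t) L \<Longrightarrow> \<exists>G. G' = shift k c G \<and> ty G t L"
proof (induction t arbitrary: c G' L)
  case (Var x)
  then show ?case by (intro exI[of _ "sing x {#L#}"]) (simp add: ty_Var_iff shift_sing)
next
  case (Lam t)
  from Lam.prems consider "L = TN" "G' = 0"
    | G1 L' where "L = Arr (G1 0) L'" "G' = ctx_tail G1" "ty G1 (lift k (Suc c) t) L'"
    by (auto simp: ty_Lam_iff)
  then show ?case
  proof cases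
    case 1
    then show ?thesis by (intro exI[of _ 0]) (simp add: ty_axlam)
  next
    case 2
    then obtain G0 where "G1 = shift k (Suc c) G0" "ty G0 t L'" using Lam.IH by blast
    then show ?thesis using 2 ty_lam[of G0 t L'] by (intro exI[of _ "ctx_tail G0"]) simp
  qed
next
  case (App t1 t2)
  then obtain G1 G2 M where h: "G' = G1 + G2" "ty G1 (lift k c t1) (Arr M L)"
     "mty G2 (lift k c t2) (M + {#TN#})"
    by (auto simp: ty_App_iff)
  obtain H1 where h1: "G1 = shift k c H1" "ty H1 t1 (Arr M L)" using App.IH(1) h by blast
  obtain H2 where h2: "G2 = shift k c H2" "mty H2 t2 (M + {#TN#})"
    using mty_back[of "lift k c t2" "shift k c" t2, OF App.IH(2)] h by auto
  show ?case using h h1 h2 ty_app by (intro exI[of _ "H1 + H2"]) auto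
next
  case (ES t1 t2)
  then obtain G1 G2 where h: "G' = ctx_tail G1 + G2" "ty G1 (lift k (Suc c) t1) L"
     "mty G2 (lift k c t2) (G1 0 + {#TN#})"
    by (auto simp: ty_ES_iff)
  obtain H1 where h1: "G1 = shift k (Suc c) H1" "ty H1 t1 L" using ES.IH(1) h by blast
  obtain H2 where h2: "G2 = shift k c H2" "mty H2 t2 (G1 0 + {#TN#})"
    using mty_back[of "lift k c t2" "shift k c" t2, OF ES.IH(2)] h by auto
  show ?case using h h1 h2 ty_es[of H1 t1 L H2 t2] by (intro exI[of _ "ctx_tail H1 + H2"]) auto
qed

lemma mty_lift_back: "mty G' (lift k c t) M \<Longrightarrow> \<exists>G. G' = shift k c G \<and> mty G t M"
  by (rule mty_back[OF ty_lift_back]) auto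

lemma lift_0[simp]: "lift 0 c t = t"
  by (induction t arbitrary: c) auto

lemma lift_lift: "lift a c (lift b c t) = lift (a + b) c t"
  by (induction t arbitrary: c) auto

lemma lift_lower: "\<not> free c t \<Longrightarrow> lift 1 c (lower c t) = t"
  by (induction t arbitrary: c) auto

lemma compat:
  assumes "\<And>G L. ty G t L \<Longrightarrow> ty G u L"
  shows "ty G (plugC C t) L \<Longrightarrow> ty G (plugC C u) L"
proof (induction C arbitrary: G L)
  case Hole
  then show ?case using assms by simp
next
  case (CLam C)
  then show ?case by (simp add: ty_Lam_iff) blast
next
  case (CAppL C x2)
  then show ?case by (simp add: ty_App_iff) blast
next
  case (CAppR x1 C)
  then show ?case using mty_map[of "plugC C t" "\<lambda>G. G" "plugC C u"] by (simp add: ty_App_iff) blast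
next
  case (CESBody C x2)
  then show ?case by (simp add: ty_ES_iff) blast
next
  case (CESArg x1 C)
  then show ?case using mty_map[of "plugC C t" "\<lambda>G. G" "plugC C u"] by (simp add: ty_ES_iff) blast
qed


lemma shift10_add0[simp]: "(G + shift (Suc 0) 0 D) 0 = G 0"
  by (simp add: app_simps)

lemma root_m_fwd: "ty G (App (plugS us (Lam t)) u) L \<Longrightarrow> ty G (plugS us (ES t (lift (length us) 0 u))) L"
proof (induction us arbitrary: u G L)
  case Nil
  then obtain G1 G2 M where h: "G = G1 + G2" "ty G1 (Lam t) (Arr M L)" "mty G2 u (M + {#TN#})"
    by (auto simp: ty_App_iff)
  then obtain G' where "G1 = ctx_tail G'" "M = G' 0" "ty G' t L" by (auto simp: ty_Lam_iff)
  then show ?case using h ty_es[of G' t L G2 u] by simp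
next
  case (Cons u1 us)
  from Cons.prems obtain G1 G2 M where h: "G = G1 + G2"
    "ty G1 (ES (plugS us (Lam t)) u1) (Arr M L)" "mty G2 u (M + {#TN#})"
    by (auto simp: ty_App_iff)
  then obtain H K where h2: "G1 = ctx_tail H + K" "ty H (plugS us (Lam t)) (Arr M L)"
    "mty K u1 (H 0 + {#TN#})" by (auto simp: ty_ES_iff)
  have "mty (shift 1 0 G2) (lift 1 0 u) (M + {#TN#})" using h(3) by (rule mty_lift)
  then have "ty (H + shift 1 0 G2) (App (plugS us (Lam t)) (lift 1 0 u)) L"
    using h2(2) ty_app by blast
  then have "ty (H + shift 1 0 G2) (plugS us (ES t (lift (length us) 0 (lift 1 0 u)))) L"
    by (rule Cons.IH)
  moreover have "mty K u1 ((H + shift 1 0 G2) 0 + {#TN#})" using h2(3) by simp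
  ultimately have "ty (ctx_tail (H + shift 1 0 G2) + K) (ES (plugS us (ES t (lift (length us) 0 (lift 1 0 u)))) u1) L"
    by (rule ty_es)
  moreover have "ctx_tail (H + shift 1 0 G2) + K = G" using h h2 by (simp add: add_ac)
  ultimately show ?case by (simp add: lift_lift)
qed

lemma root_m_bwd: "ty G (plugS us (ES t (lift (length us) 0 u))) L \<Longrightarrow> ty G (App (plugS us (Lam t)) u) L"
proof (induction us arbitrary: u G L)
  case Nil
  then obtain G1 G2 where h: "G = ctx_tail G1 + G2" "ty G1 t L" "mty G2 u (G1 0 + {#TN#})"
    by (auto simp: ty_ES_iff)
  then show ?case using ty_app[OF ty_lam[OF h(2)] h(3)] by simp
next
  case (Cons u1 us)
  have e: "lift (length (u1 # us)) 0 u = lift (length us) 0 (lift 1 0 u)" by (simp add: lift_lift)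
  from Cons.prems obtain H1 H2 where h: "G = ctx_tail H1 + H2"
    "ty H1 (plugS us (ES t (lift (length us) 0 (lift 1 0 u)))) L" "mty H2 u1 (H1 0 + {#TN#})"
    unfolding e by (auto simp: ty_ES_iff)
  from Cons.IH[OF h(2)] obtain A B M where h2: "H1 = A + B" "ty A (plugS us (Lam t)) (Arr M L)"
    "mty B (lift 1 0 u) (M + {#TN#})" by (auto simp: ty_App_iff)
  from mty_lift_back[OF h2(3)] obtain B0 where h3: "B = shift 1 0 B0" "mty B0 u (M + {#TN#})" by blast
  have "H1 0 = A 0" using h2 h3 by simp
  then have "ty (ctx_tail A + H2) (ES (plugS us (Lam t)) u1) (Arr M L)"
    using ty_es[OF h2(2)] h(3) by simp
  then have "ty (ctx_tail A + H2 + B0) (App (ES (plugS us (Lam t)) u1) u) L"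
    using ty_app h3(2) by blast
  moreover have "ctx_tail A + H2 + B0 = G" using h h2 h3 by (simp add: add_ac)
  ultimately show ?case by simp
qed

lemma value_TN: "is_value v \<Longrightarrow> ty D v TN \<longleftrightarrow> D = 0"
  by (auto simp: is_value_def ty_Lam_iff ty_axlam)

lemma shift10_1[simp]: "shift (Suc 0) 0 (shift (Suc 0) 0 J) (Suc 0) = {#}"
  by (simp add: shift_def)

lemma root_gc_fwd: "is_value v \<Longrightarrow> ty G (ES (lift 1 0 s) (plugS us v)) L \<Longrightarrow>
   ty G (plugS us (lift (length us) 0 s)) L"
proof (induction us arbitrary: s G L)
  case Nil
  then obtain G1 D where h: "G = ctx_tail G1 + D" "ty G1 (lift 1 0 s) L" "mty D v (G1 0 + {#TN#})"
    by (auto simp: ty_ES_iff)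
  from ty_lift_back[OF h(2)] obtain G0 where "G1 = shift 1 0 G0" "ty G0 s L" by blast
  then show ?case using h value_TN[OF Nil.prems(1)] by simp
next
  case (Cons u1 us)
  let ?P = "plugS us v"
  from Cons.prems obtain G1 D where h: "G = ctx_tail G1 + D" "ty G1 (lift 1 0 s) L"
    "mty D (ES ?P u1) (G1 0 + {#TN#})"
    by (auto simp: ty_ES_iff)
  from ty_lift_back[OF h(2)] obtain J where j: "G1 = shift 1 0 J" "ty J s L" by blast
  from h(3) j obtain D1 D2 where d: "D = ctx_tail D1 + D2" "ty D1 ?P TN" "mty D2 u1 (D1 0 + {#TN#})"
    by (auto simp: ty_ES_iff)
  define J2 where "J2 = shift 1 0 (shift 1 0 J)"
  have "ty J2 (lift 1 0 (lift 1 0 s)) L" unfolding J2_def using j(2) by (intro ty_lift)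
  moreover have "mty D1 ?P (J2 0 + {#TN#})" using d(2) by (simp add: J2_def)
  ultimately have "ty (ctx_tail J2 + D1) (ES (lift 1 0 (lift 1 0 s)) ?P) L" by (rule ty_es)
  then have "ty (ctx_tail J2 + D1) (plugS us (lift (length us) 0 (lift 1 0 s))) L"
    using Cons.IH Cons.prems(1) by blast
  moreover have "(ctx_tail J2 + D1) 0 = D1 0" by (simp add: J2_def app_simps tail_apply shift10_1)
  ultimately have "ty (ctx_tail (ctx_tail J2 + D1) + D2) (ES (plugS us (lift (length us) 0 (lift 1 0 s))) u1) L"
    using ty_es d(3) by fastforce
  moreover have "ctx_tail (ctx_tail J2 + D1) + D2 = G" using h j d by (simp add: J2_def add_ac)
  ultimately show ?case by (simp add: lift_lift)
qed

lemma root_gc_bwd: "is_value v \<Longrightarrow> ty G (plugS us (lift (length us) 0 s)) L \<Longrightarrow>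
   ty G (ES (lift 1 0 s) (plugS us v)) L"
proof (induction us arbitrary: s G L)
  case Nil
  then have "ty (shift 1 0 G) (lift 1 0 s) L" by (simp add: ty_lift)
  moreover have "mty 0 v (shift 1 0 G 0 + {#TN#})" using value_TN[OF Nil.prems(1)] by simp
  ultimately show ?case using ty_es by fastforce
next
  case (Cons u1 us)
  let ?P = "plugS us v"
  have e: "lift (length (u1 # us)) 0 s = lift (length us) 0 (lift 1 0 s)" by (simp add: lift_lift)
  from Cons.prems(2) obtain H1 H2 where h: "G = ctx_tail H1 + H2"
    "ty H1 (plugS us (lift (length us) 0 (lift 1 0 s))) L" "mty H2 u1 (H1 0 + {#TN#})"
    unfolding e by (auto simp: ty_ES_iff)
  from Cons.IH[OF Cons.prems(1) h(2)] obtain K1 K2 where k: "H1 = ctx_tail K1 + K2"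
    "ty K1 (lift 1 0 (lift 1 0 s)) L" "mty K2 ?P (K1 0 + {#TN#})"
    by (auto simp: ty_ES_iff)
  from ty_lift_back[OF k(2)] obtain K0 where k0: "K1 = shift 1 0 K0" "ty K0 (lift 1 0 s) L" by blast
  from ty_lift_back[OF k0(2)] obtain J where j: "K0 = shift 1 0 J" "ty J s L" by blast
  have tk2: "ty K2 ?P TN" using k(3) k0 by simp
  have "H1 0 = K2 0" using k k0 j by (simp add: app_simps tail_apply shift10_1)
  then have "ty (ctx_tail K2 + H2) (ES ?P u1) TN" using ty_es[OF tk2] h(3) by simp
  then have "mty (ctx_tail K2 + H2) (ES ?P u1) (shift 1 0 J 0 + {#TN#})" by simp
  then have "ty (ctx_tail (shift 1 0 J) + (ctx_tail K2 + H2)) (ES (lift 1 0 s) (ES ?P u1)) L"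
    using ty_es ty_lift[OF j(2)] by blast
  moreover have "ctx_tail (shift 1 0 J) + (ctx_tail K2 + H2) = G" using h k k0 j by (simp add: add_ac)
  ultimately show ?case by simp
qed


lemma E1m:
  assumes H: "\<And>G L. ty G s L \<Longrightarrow> \<exists>A G'. A \<noteq> {#} \<and> G = G' + sing x A \<and>
        (\<forall>u D. mty D u A \<longrightarrow> ty (G' + D) (s' u) L)"
  shows "mty G s M \<Longrightarrow> \<exists>A G'. (M \<noteq> {#} \<longrightarrow> A \<noteq> {#}) \<and> G = G' + sing x A \<and>
        (\<forall>u D. mty D u A \<longrightarrow> mty (G' + D) (s' u) M)"
proof (induction M arbitrary: G)
  case empty
  then have "G = 0" by (simp add: mty_empty_iff)
  then show ?case by (intro exI[of _ "{#}"] exI[of _ 0]) (simp add: mty_empty_iff mty_empty)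
next
  case (add L M)
  then obtain G1 G2 where g: "G = G1 + G2" "ty G1 s L" "mty G2 s M" by (auto simp: mty_add_iff)
  from H[OF g(2)] obtain A1 G1' where a1: "A1 \<noteq> {#}" "G1 = G1' + sing x A1"
    "\<forall>u D. mty D u A1 \<longrightarrow> ty (G1' + D) (s' u) L" by blast
  from add.IH[OF g(3)] obtain A2 G2' where a2: "G2 = G2' + sing x A2"
    "\<forall>u D. mty D u A2 \<longrightarrow> mty (G2' + D) (s' u) M" by blast
  show ?case
  proof (intro exI[of _ "A1 + A2"] exI[of _ "G1' + G2'"] conjI allI impI)
    show "A1 + A2 \<noteq> {#}" using a1 by simp
    show "G = G1' + G2' + sing x (A1 + A2)" using g a1 a2 by (simp add: sing_add add_ac)
  next
    fix u D assume "mty D u (A1 + A2)"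
    then obtain D1 D2 where "D = D1 + D2" "mty D1 u A1" "mty D2 u A2" by (auto simp: mty_union_iff)
    then have "mty ((G1' + D1) + (G2' + D2)) (s' u) (add_mset L M)"
      using a1 a2 mty_add by blast
    then show "mty (G1' + G2' + D) (s' u) (add_mset L M)" using \<open>D = D1 + D2\<close> by (simp add: add_ac)
  qed
qed

lemma E1: "ty G (plugW W (Var (depthW W + x))) L \<Longrightarrow> \<exists>A G'. A \<noteq> {#} \<and> G = G' + sing x A \<and>
        (\<forall>u D. mty D u A \<longrightarrow> ty (G' + D) (plugW W (lift (depthW W) 0 u)) L)"
proof (induction W arbitrary: x G L)
  case WHole
  then show ?case by (intro exI[of _ "{#L#}"] exI[of _ 0]) (simp add: ty_Var_iff)
next
  case (WAppL W t2)
  then obtain G1 G2 M where g: "G = G1 + G2" "ty G1 (plugW W (Var (depthW W + x))) (Arr M L)"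
    "mty G2 t2 (M + {#TN#})" by (auto simp: ty_App_iff)
  from WAppL.IH[OF g(2)] obtain A G1' where a: "A \<noteq> {#}" "G1 = G1' + sing x A"
    "\<forall>u D. mty D u A \<longrightarrow> ty (G1' + D) (plugW W (lift (depthW W) 0 u)) (Arr M L)" by blast
  show ?case
  proof (intro exI[of _ A] exI[of _ "G1' + G2"] conjI allI impI)
    show "A \<noteq> {#}" by fact
    show "G = G1' + G2 + sing x A" using g a by (simp add: add_ac)
  next
    fix u D assume "mty D u A"
    then have "ty (G1' + D + G2) (App (plugW W (lift (depthW W) 0 u)) t2) L"
      using a g ty_app by blast
    then show "ty (G1' + G2 + D) (plugW (WAppL W t2) (lift (depthW (WAppL W t2)) 0 u)) L"
      by (simp add: add_ac)
  qed
next
  case (WAppR t1 W)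
  then obtain G1 G2 M where g: "G = G1 + G2" "ty G1 t1 (Arr M L)"
    "mty G2 (plugW W (Var (depthW W + x))) (M + {#TN#})" by (auto simp: ty_App_iff)
  from E1m[of "plugW W (Var (depthW W + x))" x "\<lambda>u. plugW W (lift (depthW W) 0 u)", OF WAppR.IH g(3)]
  obtain A G2' where a: "A \<noteq> {#}" "G2 = G2' + sing x A"
    "\<forall>u D. mty D u A \<longrightarrow> mty (G2' + D) (plugW W (lift (depthW W) 0 u)) (M + {#TN#})" by auto
  show ?case
  proof (intro exI[of _ A] exI[of _ "G1 + G2'"] conjI allI impI)
    show "A \<noteq> {#}" by fact
    show "G = G1 + G2' + sing x A" using g a by (simp add: add_ac)
  next
    fix u D assume "mty D u A"
    then have "ty (G1 + (G2' + D)) (App t1 (plugW W (lift (depthW W) 0 u))) L"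
      using a g ty_app by blast
    then show "ty (G1 + G2' + D) (plugW (WAppR t1 W) (lift (depthW (WAppR t1 W)) 0 u)) L"
      by (simp add: add_ac)
  qed
next
  case (WESArg t1 W)
  then obtain G1 G2 where g: "G = ctx_tail G1 + G2" "ty G1 t1 L"
    "mty G2 (plugW W (Var (depthW W + x))) (G1 0 + {#TN#})" by (auto simp: ty_ES_iff)
  from E1m[of "plugW W (Var (depthW W + x))" x "\<lambda>u. plugW W (lift (depthW W) 0 u)", OF WESArg.IH g(3)]
  obtain A G2' where a: "A \<noteq> {#}" "G2 = G2' + sing x A"
    "\<forall>u D. mty D u A \<longrightarrow> mty (G2' + D) (plugW W (lift (depthW W) 0 u)) (G1 0 + {#TN#})" by auto
  show ?case
  proof (intro exI[of _ A] exI[of _ "ctx_tail G1 + G2'"] conjI allI impI)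
    show "A \<noteq> {#}" by fact
    show "G = ctx_tail G1 + G2' + sing x A" using g a by (simp add: add_ac)
  next
    fix u D assume "mty D u A"
    then have "ty (ctx_tail G1 + (G2' + D)) (ES t1 (plugW W (lift (depthW W) 0 u))) L"
      using a g ty_es by blast
    then show "ty (ctx_tail G1 + G2' + D) (plugW (WESArg t1 W) (lift (depthW (WESArg t1 W)) 0 u)) L"
      by (simp add: add_ac)
  qed
next
  case (WESBody W t2)
  have e: "depthW (WESBody W t2) + x = depthW W + Suc x" by simp
  from WESBody.prems obtain G1 G2 where g: "G = ctx_tail G1 + G2"
    "ty G1 (plugW W (Var (depthW W + Suc x))) L" "mty G2 t2 (G1 0 + {#TN#})"
    unfolding e by (auto simp: ty_ES_iff)
  from WESBody.IH[OF g(2)] obtain A G1' where a: "A \<noteq> {#}" "G1 = G1' + sing (Suc x) A"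
    "\<forall>u D. mty D u A \<longrightarrow> ty (G1' + D) (plugW W (lift (depthW W) 0 u)) L" by blast
  show ?case
  proof (intro exI[of _ A] exI[of _ "ctx_tail G1' + G2"] conjI allI impI)
    show "A \<noteq> {#}" by fact
    show "G = ctx_tail G1' + G2 + sing x A" using g a by (simp add: add_ac)
  next
    fix u D assume "mty D u A"
    then have "mty (shift 1 0 D) (lift 1 0 u) A" by (rule mty_lift)
    then have "ty (G1' + shift 1 0 D) (plugW W (lift (depthW W) 0 (lift 1 0 u))) L" using a by blast
    moreover have "mty G2 t2 ((G1' + shift 1 0 D) 0 + {#TN#})" using g a by (simp add: app_simps sing_apply)
    ultimately have "ty (ctx_tail (G1' + shift 1 0 D) + G2) (ES (plugW W (lift (depthW W) 0 (lift 1 0 u))) t2) L"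
      by (rule ty_es)
    then show "ty (ctx_tail G1' + G2 + D) (plugW (WESBody W t2) (lift (depthW (WESBody W t2)) 0 u)) L"
      by (simp add: add_ac lift_lift)
  qed
qed

lemma E2m:
  assumes H: "\<And>G L. ty G s L \<Longrightarrow> \<exists>A G' D. A \<noteq> {#} \<and> G = G' + D \<and> mty D u A \<and>
        (\<forall>x. ty (G' + sing x A) (s' x) L)"
  shows "mty G s M \<Longrightarrow> \<exists>A G' D. (M \<noteq> {#} \<longrightarrow> A \<noteq> {#}) \<and> G = G' + D \<and> mty D u A \<and>
        (\<forall>x. mty (G' + sing x A) (s' x) M)"
proof (induction M arbitrary: G)
  case empty
  then have "G = 0" by (simp add: mty_empty_iff)
  then show ?case by (intro exI[of _ "{#}"] exI[of _ 0]) (simp add: mty_empty_iff mty_empty)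
next
  case (add L M)
  then obtain G1 G2 where g: "G = G1 + G2" "ty G1 s L" "mty G2 s M" by (auto simp: mty_add_iff)
  from H[OF g(2)] obtain A1 G1' D1 where a1: "A1 \<noteq> {#}" "G1 = G1' + D1" "mty D1 u A1"
    "\<forall>x. ty (G1' + sing x A1) (s' x) L" by blast
  from add.IH[OF g(3)] obtain A2 G2' D2 where a2: "G2 = G2' + D2" "mty D2 u A2"
    "\<forall>x. mty (G2' + sing x A2) (s' x) M" by blast
  show ?case
  proof (rule exI[of _ "A1 + A2"], rule exI[of _ "G1' + G2'"], rule exI[of _ "D1 + D2"], intro conjI allI impI)
    show "A1 + A2 \<noteq> {#}" using a1 by simp
    show "G = G1' + G2' + (D1 + D2)" using g a1 a2 by (simp add: add_ac)
    show "mty (D1 + D2) u (A1 + A2)" using a1 a2 mty_union by blast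
  next
    fix x
    have "mty ((G1' + sing x A1) + (G2' + sing x A2)) (s' x) (add_mset L M)"
      using a1 a2 mty_add by blast
    then show "mty (G1' + G2' + sing x (A1 + A2)) (s' x) (add_mset L M)"
      by (simp add: add_ac sing_add)
  qed
qed

lemma E2: "ty G (plugW W (lift (depthW W) 0 u)) L \<Longrightarrow> \<exists>A G' D. A \<noteq> {#} \<and> G = G' + D \<and>
   mty D u A \<and> (\<forall>x. ty (G' + sing x A) (plugW W (Var (depthW W + x))) L)"
proof (induction W arbitrary: u G L)
  case WHole
  then show ?case by (intro exI[of _ "{#L#}"] exI[of _ 0] exI[of _ G]) (simp add: ty_var)
next
  case (WAppL W t2)
  then obtain G1 G2 M where g: "G = G1 + G2" "ty G1 (plugW W (lift (depthW W) 0 u)) (Arr M L)"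
    "mty G2 t2 (M + {#TN#})" by (auto simp: ty_App_iff)
  from WAppL.IH[OF g(2)] obtain A G1' D where a: "A \<noteq> {#}" "G1 = G1' + D" "mty D u A"
    "\<forall>x. ty (G1' + sing x A) (plugW W (Var (depthW W + x))) (Arr M L)" by blast
  show ?case
  proof (rule exI[of _ A], rule exI[of _ "G1' + G2"], rule exI[of _ D], intro conjI allI)
    show "A \<noteq> {#}" "mty D u A" by fact+
    show "G = G1' + G2 + D" using g a by (simp add: add_ac)
  next
    fix x
    have "ty (G1' + sing x A + G2) (App (plugW W (Var (depthW W + x))) t2) L"
      using a g ty_app by blast
    then show "ty (G1' + G2 + sing x A) (plugW (WAppL W t2) (Var (depthW (WAppL W t2) + x))) L"
      by (simp add: add_ac)
  qed
next
  case (WAppR t1 W)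
  then obtain G1 G2 M where g: "G = G1 + G2" "ty G1 t1 (Arr M L)"
    "mty G2 (plugW W (lift (depthW W) 0 u)) (M + {#TN#})" by (auto simp: ty_App_iff)
  from E2m[of "plugW W (lift (depthW W) 0 u)" u "\<lambda>x. plugW W (Var (depthW W + x))", OF WAppR.IH g(3)]
  obtain A G2' D where a: "A \<noteq> {#}" "G2 = G2' + D" "mty D u A"
    "\<forall>x. mty (G2' + sing x A) (plugW W (Var (depthW W + x))) (M + {#TN#})" by auto
  show ?case
  proof (rule exI[of _ A], rule exI[of _ "G1 + G2'"], rule exI[of _ D], intro conjI allI)
    show "A \<noteq> {#}" "mty D u A" by fact+
    show "G = G1 + G2' + D" using g a by (simp add: add_ac)
  next
    fix x
    have "ty (G1 + (G2' + sing x A)) (App t1 (plugW W (Var (depthW W + x)))) L"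
      using a g ty_app by blast
    then show "ty (G1 + G2' + sing x A) (plugW (WAppR t1 W) (Var (depthW (WAppR t1 W) + x))) L"
      by (simp add: add_ac)
  qed
next
  case (WESArg t1 W)
  then obtain G1 G2 where g: "G = ctx_tail G1 + G2" "ty G1 t1 L"
    "mty G2 (plugW W (lift (depthW W) 0 u)) (G1 0 + {#TN#})" by (auto simp: ty_ES_iff)
  from E2m[of "plugW W (lift (depthW W) 0 u)" u "\<lambda>x. plugW W (Var (depthW W + x))", OF WESArg.IH g(3)]
  obtain A G2' D where a: "A \<noteq> {#}" "G2 = G2' + D" "mty D u A"
    "\<forall>x. mty (G2' + sing x A) (plugW W (Var (depthW W + x))) (G1 0 + {#TN#})" by auto
  show ?case
  proof (rule exI[of _ A], rule exI[of _ "ctx_tail G1 + G2'"], rule exI[of _ D], intro conjI allI)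
    show "A \<noteq> {#}" "mty D u A" by fact+
    show "G = ctx_tail G1 + G2' + D" using g a by (simp add: add_ac)
  next
    fix x
    have "ty (ctx_tail G1 + (G2' + sing x A)) (ES t1 (plugW W (Var (depthW W + x)))) L"
      using a g ty_es by blast
    then show "ty (ctx_tail G1 + G2' + sing x A) (plugW (WESArg t1 W) (Var (depthW (WESArg t1 W) + x))) L"
      by (simp add: add_ac)
  qed
next
  case (WESBody W t2)
  have e: "lift (depthW (WESBody W t2)) 0 u = lift (depthW W) 0 (lift 1 0 u)" by (simp add: lift_lift)
  from WESBody.prems obtain G1 G2 where g: "G = ctx_tail G1 + G2"
    "ty G1 (plugW W (lift (depthW W) 0 (lift 1 0 u))) L" "mty G2 t2 (G1 0 + {#TN#})"
    unfolding e by (auto simp: ty_ES_iff)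
  from WESBody.IH[OF g(2)] obtain A G1' D' where a: "A \<noteq> {#}" "G1 = G1' + D'"
    "mty D' (lift 1 0 u) A"
    "\<forall>x. ty (G1' + sing x A) (plugW W (Var (depthW W + x))) L" by blast
  from mty_lift_back[OF a(3)] obtain D0 where d0: "D' = shift 1 0 D0" "mty D0 u A" by blast
  show ?case
  proof (rule exI[of _ A], rule exI[of _ "ctx_tail G1' + G2"], rule exI[of _ D0], intro conjI allI)
    show "A \<noteq> {#}" "mty D0 u A" by fact+
    show "G = ctx_tail G1' + G2 + D0" using g a d0 by (simp add: add_ac)
  next
    fix x
    have "ty (G1' + sing (Suc x) A) (plugW W (Var (depthW W + Suc x))) L" using a by blast
    moreover have "mty G2 t2 ((G1' + sing (Suc x) A) 0 + {#TN#})" using g a d0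
      by (simp add: app_simps sing_apply)
    ultimately have "ty (ctx_tail (G1' + sing (Suc x) A) + G2) (ES (plugW W (Var (depthW W + Suc x))) t2) L"
      by (rule ty_es)
    then show "ty (ctx_tail G1' + G2 + sing x A) (plugW (WESBody W t2) (Var (depthW (WESBody W t2) + x))) L"
      by (simp add: add_ac)
  qed
qed


lemma root_e_fwd: "ty G (ES (plugW W (Var (depthW W))) u) L \<Longrightarrow>
   ty G (ES (plugW W (lift (Suc (depthW W)) 0 u)) u) L"
proof -
  assume "ty G (ES (plugW W (Var (depthW W))) u) L"
  then obtain G1 D where g: "G = ctx_tail G1 + D" "ty G1 (plugW W (Var (depthW W + 0))) L"
    "mty D u (G1 0 + {#TN#})" by (auto simp: ty_ES_iff)
  from E1[OF g(2)] obtain A G' where a: "A \<noteq> {#}" "G1 = G' + sing 0 A"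
    "\<forall>u D. mty D u A \<longrightarrow> ty (G' + D) (plugW W (lift (depthW W) 0 u)) L" by blast
  have eq: "G1 0 + {#TN#} = A + (G' 0 + {#TN#})" using a by (simp add: app_simps sing_apply add_ac)
  have m: "mty D u (A + (G' 0 + {#TN#}))" using g(3) unfolding eq .
  then obtain Da Db where d: "D = Da + Db" "mty Da u A" "mty Db u (G' 0 + {#TN#})"
    unfolding mty_union_iff by blast
  have "mty (shift 1 0 Da) (lift 1 0 u) A" using d(2) by (rule mty_lift)
  then have "ty (G' + shift 1 0 Da) (plugW W (lift (depthW W) 0 (lift 1 0 u))) L" using a by blast
  moreover have "mty Db u ((G' + shift 1 0 Da) 0 + {#TN#})" using d by simp
  ultimately have "ty (ctx_tail (G' + shift 1 0 Da) + Db) (ES (plugW W (lift (depthW W) 0 (lift 1 0 u))) u) L"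
    by (rule ty_es)
  moreover have "ctx_tail (G' + shift 1 0 Da) + Db = G" using g a d by (simp add: add_ac)
  ultimately show ?thesis by (simp add: lift_lift)
qed

lemma root_e_bwd: "ty G (ES (plugW W (lift (Suc (depthW W)) 0 u)) u) L \<Longrightarrow>
   ty G (ES (plugW W (Var (depthW W))) u) L"
proof -
  have e: "lift (Suc (depthW W)) 0 u = lift (depthW W) 0 (lift 1 0 u)" by (simp add: lift_lift)
  assume "ty G (ES (plugW W (lift (Suc (depthW W)) 0 u)) u) L"
  then obtain G1 D0 where g: "G = ctx_tail G1 + D0" "ty G1 (plugW W (lift (depthW W) 0 (lift 1 0 u))) L"
    "mty D0 u (G1 0 + {#TN#})" unfolding e by (auto simp: ty_ES_iff)
  from E2[OF g(2)] obtain A G' D' where a: "A \<noteq> {#}" "G1 = G' + D'" "mty D' (lift 1 0 u) A"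
    "\<forall>x. ty (G' + sing x A) (plugW W (Var (depthW W + x))) L" by blast
  from mty_lift_back[OF a(3)] obtain Dd where d: "D' = shift 1 0 Dd" "mty Dd u A" by blast
  have "ty (G' + sing 0 A) (plugW W (Var (depthW W))) L" using a(4)[rule_format, of 0] by simp
  moreover have "mty (D0 + Dd) u ((G' + sing 0 A) 0 + {#TN#})"
  proof -
    have "mty (D0 + Dd) u ((G1 0 + {#TN#}) + A)" by (rule mty_union[OF g(3) d(2)])
    moreover have "(G1 0 + {#TN#}) + A = (G' + sing 0 A) 0 + {#TN#}" using a(2) d(1)
      by (simp add: app_simps sing_apply add_ac)
    ultimately show ?thesis by simp
  qed
  ultimately have "ty (ctx_tail (G' + sing 0 A) + (D0 + Dd)) (ES (plugW W (Var (depthW W))) u) L"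
    by (rule ty_es)
  moreover have "ctx_tail (G' + sing 0 A) + (D0 + Dd) = G" using g a d by (simp add: add_ac)
  ultimately show ?thesis by simp
qed

lemma root_equiv: "root t u \<Longrightarrow> ty G t L \<longleftrightarrow> ty G u L"
proof (induction rule: root.induct)
  case (root_m us t u)
  then show ?case using root_m_fwd root_m_bwd by blast
next
  case (root_e W u)
  then show ?case using root_e_fwd root_e_bwd by blast
next
  case (root_gcv v t us)
  then have "t = lift 1 0 (lower 0 t)" using lift_lower[of 0 t] by metis
  then show ?case using root_gc_fwd[OF root_gcv(1)] root_gc_bwd[OF root_gcv(1)] by metis
qed

fun w2c :: "wctx \<Rightarrow> ctx" where
  "w2c WHole = Hole"
| "w2c (WAppL W u) = CAppL (w2c W) u"
| "w2c (WAppR u W) = CAppR u (w2c W)"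
| "w2c (WESArg u W) = CESArg u (w2c W)"
| "w2c (WESBody W u) = CESBody (w2c W) u"

lemma plugW_C: "plugW W t = plugC (w2c W) t"
  by (induction W) auto

lemma compat_equiv: "(\<And>G L. ty G t L \<longleftrightarrow> ty G u L) \<Longrightarrow> typ_equiv (plugC C t) (plugC C u)"
  by (rule ty_typ_equiv) (metis compat)

theorem theorem6p8:
  shows "(\<forall>t u. wstep t u \<longrightarrow> typ_equiv t u)
       \<and> (\<forall>t u C. typ_equiv t u \<longrightarrow> typ_equiv (plugC C t) (plugC C u))"
proof (intro conjI allI impI)
  fix t u assume "wstep t u"
  then show "typ_equiv t u"
  proof cases
    case (1 t0 u0 W)
    then show ?thesis using compat_equiv[of t0 u0 "w2c W"] root_equiv[OF 1(3)] by (simp add: plugW_C)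
  qed
next
  fix t u C assume "typ_equiv t u"
  then show "typ_equiv (plugC C t) (plugC C u)" using compat_equiv typ_equiv_ty by blast
qed

end
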